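(* Let $\Delta$ be an environment and $\eta:\mathfrak X\to\mathcal P(\Sigma^{\le\omega})$ with $\eta\models\Delta$. Let $f\in\mathcal F$, $U\subseteq\Sigma^*$, let $X\in\mathfrak X$ be a variable not used by any binding of $\Delta$, and let $V_0\subseteq\Sigma^{\le\omega}$ be such that $f\uparrow w$ implies $w\in V_0$ for all traces $w$. Put $\eta'=\eta[X\mapsto V_0]$. If $\Delta, f\ \&\ (U,X)\vdash e_f\ \&\ (U, A\cdot X\cup V(\mathfrak X-X))$ is derivable for some $A\subseteq\Sigma^*$ and some expression $V(\mathfrak X-X)$, then $\eta'\models \Delta, f\ \&\ (U,X)$.
   Context: Fix a finite alphabet $\Sigma$ of events; $\Sigma^*$ and $\Sigma^\omega$ are the finite and infinite words, $\Sigma^{\le\omega}=\Sigma^*\cup\Sigma^\omega$. For words $w,u$, $w\cdot u=wu$ if $w$ is finite and $w\cdot u=w$ if $w$ is infinite; concatenation of languages is pointwise. Expressions: $e::=o(a)\mid f\mid e_1;e_2\mid e_1?e_2$ with $a\in\Sigma$ and $f$ a procedure name. A program is a finite set $\mathcal F$ of procedure names together with a defining expression $e_f$ for each $f\in\mathcal F$ using only names from $\mathcal F$ (recursion allowed); such a program is fixed. Trace semantics: let $\checkmark\notin\Sigma$. The relations $e\Downarrow w$ and $e\Uparrow w$, for $w\in(\Sigma\uplus\{\checkmark\})^*$, are the least relations closed under: $o(a)\Downarrow a$; $o(a)\Uparrow a$; $e\Uparrow\epsilon$ for every $e$; if $e_f\Downarrow w$ then $f\Downarrow w$; if $e_f\Uparrow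 w$ then $f\Uparrow\checkmark w$; if $e_1\Downarrow w$ and $e_2\Downarrow u$ then $e_1;e_2\Downarrow wu$; if $e_1\Downarrow w$ and $e_2\Uparrow u$ then $e_1;e_2\Uparrow wu$; if $e_1\Uparrow w$ then $e_1;e_2\Uparrow w$; if $e_1\Downarrow w$ or $e_2\Downarrow w$ then $e_1?e_2\Downarrow w$; if $e_1\Uparrow w$ or $e_2\Uparrow w$ then $e_1?e_2\Uparrow w$. Let $\theta$ delete all occurrences of $\checkmark$ from a word. Then $e\downarrow w$ iff $w=\theta(w')$ for some $w'\in(\Sigma\uplus\{\checkmark\})^*$ with $e\Downarrow w'$; and $e\uparrow w$ iff $w=\theta(w')$ for some infinite $w'\in(\Sigma\uplus\{\checkmark\})^\omega$ such that $e\Uparrow u$ for every finite prefix $u$ of $w'$. Let $\mathfrak X$ be a set of variables. For $A\subseteq\Sigma^*$, $A^*$ is the Kleene star and $A^\omega$ is the set of all words $w_0\cdot w_1\cdot w_2\cdots$ with all $w_i\in A$. An expression $V(\mathfrak X)$ is a formal expression $\bigcup_{Y\in\mathfrak X}(A_Y\cdot Y)\cup B$ with $A_Y\subseteq\Sigma^*$, $B\subseteq\Sigma^{\le\omega}$; $V(\mathfrak X-X)$ denotes such an expression with $A_X=\emptyset$; the variable $X$ denotes the expression with $A_X=\{\epsilon\}$, other $A_Y=\emptyset$, $B=\emptyset$; a language $B$ denotes the expression with all $A_Y=\emptyset$. Operations: $A\cdot V(\mathfrak X)=\bigcup_Y((A\cdot A_Y)\cdot Y)\cup(A\cdot B)$,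 $V\cup V'$ componentwise. For $\eta:\mathfrak X\to\mathcal P(\Sigma^{\le\omega})$, $V(\eta)=\bigcup_Y A_Y\cdot\eta(Y)\cup B$. An environment $\Delta$ is a finite set of bindings $f\ \&\ (U,X)$ with $f\in\mathcal F$, $U\subseteq\Sigma^*$, $X\in\mathfrak X$, distinct bindings using distinct variables. Judgements $\Delta\vdash e\ \&\ (U,V(\mathfrak X))$ are derived by: (i) $\Delta\vdash o(a)\ \&\ (\{a\},\emptyset)$; (ii) from $\Delta\vdash e_1\ \&\ (U_1,V_1(\mathfrak X))$ and $\Delta\vdash e_2\ \&\ (U_2,V_2(\mathfrak X))$ infer $\Delta\vdash e_1;e_2\ \&\ (U_1\cdot U_2, V_1(\mathfrak X)\cup U_1\cdot V_2(\mathfrak X))$; (iii) from the same premises infer $\Delta\vdash e_1?e_2\ \&\ (U_1\cup U_2, V_1(\mathfrak X)\cup V_2(\mathfrak X))$; (iv) $\Delta,f\ \&\ (U,X)\vdash f\ \&\ (U,X)$; (v) from $\Delta, f\ \&\ (U,X)\vdash e_f\ \&\ (U,A\cdot X\cup V(\mathfrak X-X))$ infer $\Delta\vdash f\ \&\ (U,A^*\cdot V(\mathfrak X-X)\cup A^\omega)$. $\Delta$ is justified if for every binding $f\ \&\ (U,X)$ in $\Delta$ there are $A$, $V(\mathfrak X-X)$ with $\Delta\vdash e_f\ \&\ (U,A\cdot X\cup V(\mathfrak X-X))$. We write $\eta\models\Delta$ if $\Delta$ is justified and for every binding $g\ \&\ (U',Y)$ in $\Delta$ and every $w$ with $g\uparrow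 w$ we have $w\in\eta(Y)$. *)

theory Defs
  imports Main
begin

datatype 'a word = Fin "'a list" | Inf "nat \<Rightarrow> 'a"

fun prepend :: "'a list \<Rightarrow> 'a word \<Rightarrow> 'a word" where
  "prepend w (Fin u) = Fin (w @ u)"
| "prepend w (Inf s) = Inf (\<lambda>n. if n < length w then w ! n else s (n - length w))"

fun wcat :: "'a word \<Rightarrow> 'a word \<Rightarrow> 'a word" where
  "wcat (Fin w) u = prepend w u"
| "wcat (Inf s) u = Inf s"

definition lcat :: "'a list set \<Rightarrow> 'a list set \<Rightarrow> 'a list set" where
  "lcat A B = {w @ u | w u. w \<in> A \<and> u \<in> B}"

definition lwcat :: "'a list set \<Rightarrow> 'a word set \<Rightarrow> 'a word set" where
  "lwcat A B = {prepend w u | w u. w \<in> A \<and> u \<in> B}"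

definition ocat :: "(nat \<Rightarrow> 'a list) \<Rightarrow> 'a word" where
  "ocat ws = (if \<exists>N. \<forall>i\<ge>N. ws i = []
     then Fin (concat (map ws [0..<(LEAST N. \<forall>i\<ge>N. ws i = [])]))
     else Inf (\<lambda>n. let k = (LEAST k. n < length (concat (map ws [0..<k])))
                   in concat (map ws [0..<k]) ! n))"

definition kstar :: "'a list set \<Rightarrow> 'a list set" where
  "kstar A = {concat ws | ws. set ws \<subseteq> A}"

definition lomega :: "'a list set \<Rightarrow> 'a word set" where
  "lomega A = {ocat ws | ws. \<forall>i. ws i \<in> A}"

datatype ('a, 'f) expr = Op 'a | Call 'f | Seq "('a, 'f) expr" "('a, 'f) expr"
  | Choice "('a, 'f) expr" "('a, 'f) expr"

datatype 'a tev = Ev 'a | Tick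

fun theta :: "'a tev list \<Rightarrow> 'a list" where
  "theta [] = []"
| "theta (Ev a # w) = a # theta w"
| "theta (Tick # w) = theta w"

definition theta_inf :: "(nat \<Rightarrow> 'a tev) \<Rightarrow> 'a word" where
  "theta_inf s = ocat (\<lambda>i. theta [s i])"

inductive conv :: "('f \<Rightarrow> ('a, 'f) expr) \<Rightarrow> ('a, 'f) expr \<Rightarrow> 'a tev list \<Rightarrow> bool"
  for body where
  conv_op: "conv body (Op a) [Ev a]"
| conv_call: "conv body (body f) w \<Longrightarrow> conv body (Call f) w"
| conv_seq: "conv body e1 w \<Longrightarrow> conv body e2 u \<Longrightarrow> conv body (Seq e1 e2) (w @ u)"
| conv_ch1: "conv body e1 w \<Longrightarrow> conv body (Choice e1 e2) w"
| conv_ch2: "conv body e2 w \<Longrightarrow> conv body (Choice e1 e2) w"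

inductive divg :: "('f \<Rightarrow> ('a, 'f) expr) \<Rightarrow> ('a, 'f) expr \<Rightarrow> 'a tev list \<Rightarrow> bool"
  for body where
  divg_op: "divg body (Op a) [Ev a]"
| divg_eps: "divg body e []"
| divg_call: "divg body (body f) w \<Longrightarrow> divg body (Call f) (Tick # w)"
| divg_seq2: "conv body e1 w \<Longrightarrow> divg body e2 u \<Longrightarrow> divg body (Seq e1 e2) (w @ u)"
| divg_seq1: "divg body e1 w \<Longrightarrow> divg body (Seq e1 e2) w"
| divg_ch1: "divg body e1 w \<Longrightarrow> divg body (Choice e1 e2) w"
| divg_ch2: "divg body e2 w \<Longrightarrow> divg body (Choice e1 e2) w"

definition conv_trace :: "('f \<Rightarrow> ('a, 'f) expr) \<Rightarrow> ('a, 'f) expr \<Rightarrow> 'a list \<Rightarrow> bool" where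
  "conv_trace body e w \<longleftrightarrow> (\<exists>w'. conv body e w' \<and> w = theta w')"

definition div_trace :: "('f \<Rightarrow> ('a, 'f) expr) \<Rightarrow> ('a, 'f) expr \<Rightarrow> 'a word \<Rightarrow> bool" where
  "div_trace body e w \<longleftrightarrow>
     (\<exists>s. (\<forall>n. divg body e (map s [0..<n])) \<and> w = theta_inf s)"

text \<open>A formal expression (UN Y. A_Y . Y) Un B is represented by the pair (A, B).\<close>
type_synonym ('a, 'x) vexpr = "('x \<Rightarrow> 'a list set) \<times> 'a word set"

definition vvar :: "'x \<Rightarrow> ('a, 'x) vexpr" where
  "vvar X = ((\<lambda>Y. if Y = X then {[]} else {}), {})"

definition vlang :: "'a word set \<Rightarrow> ('a, 'x) vexpr" where
  "vlang B = ((\<lambda>Y. {}), B)"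

definition vsmult :: "'a list set \<Rightarrow> ('a, 'x) vexpr \<Rightarrow> ('a, 'x) vexpr" where
  "vsmult A V = ((\<lambda>Y. lcat A (fst V Y)), lwcat A (snd V))"

definition vunion :: "('a, 'x) vexpr \<Rightarrow> ('a, 'x) vexpr \<Rightarrow> ('a, 'x) vexpr" where
  "vunion V V' = ((\<lambda>Y. fst V Y \<union> fst V' Y), snd V \<union> snd V')"

text \<open>V(X - X0): the coefficient of X0 is empty.\<close>
definition free_of :: "'x \<Rightarrow> ('a, 'x) vexpr \<Rightarrow> bool" where
  "free_of X V \<longleftrightarrow> fst V X = {}"

definition veval :: "('a, 'x) vexpr \<Rightarrow> ('x \<Rightarrow> 'a word set) \<Rightarrow> 'a word set" where
  "veval V \<eta> = (\<Union>Y. lwcat (fst V Y) (\<eta> Y)) \<union> snd V"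

type_synonym ('f, 'a, 'x) binding = "'f \<times> 'a list set \<times> 'x"

definition bvars :: "('f, 'a, 'x) binding set \<Rightarrow> 'x set" where
  "bvars \<Delta> = (\<lambda>(f, U, X). X) ` \<Delta>"

definition env :: "('f, 'a, 'x) binding set \<Rightarrow> bool" where
  "env \<Delta> \<longleftrightarrow> finite \<Delta> \<and>
     (\<forall>b1\<in>\<Delta>. \<forall>b2\<in>\<Delta>. snd (snd b1) = snd (snd b2) \<longrightarrow> b1 = b2)"

text \<open>Judgement Delta |- e & (U, V). The extension "Delta, f & (U, X)" is insert (f,U,X) Delta
  with X not used in Delta.\<close>
inductive derives :: "('f \<Rightarrow> ('a, 'f) expr) \<Rightarrow> ('f, 'a, 'x) binding set \<Rightarrow> ('a, 'f) expr
    \<Rightarrow> 'a list set \<Rightarrow> ('a, 'x) vexpr \<Rightarrow> bool"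
  for body where
  der_op: "env \<Delta> \<Longrightarrow> derives body \<Delta> (Op a) {[a]} (vlang {})"
| der_seq: "derives body \<Delta> e1 U1 V1 \<Longrightarrow> derives body \<Delta> e2 U2 V2 \<Longrightarrow>
    derives body \<Delta> (Seq e1 e2) (lcat U1 U2) (vunion V1 (vsmult U1 V2))"
| der_choice: "derives body \<Delta> e1 U1 V1 \<Longrightarrow> derives body \<Delta> e2 U2 V2 \<Longrightarrow>
    derives body \<Delta> (Choice e1 e2) (U1 \<union> U2) (vunion V1 V2)"
| der_var: "env \<Delta> \<Longrightarrow> (f, U, X) \<in> \<Delta> \<Longrightarrow> derives body \<Delta> (Call f) U (vvar X)"
| der_rec: "X \<notin> bvars \<Delta> \<Longrightarrow> free_of X V \<Longrightarrow>
    derives body (insert (f, U, X) \<Delta>) (body f) U (vunion (vsmult A (vvar X)) V) \<Longrightarrow>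
    derives body \<Delta> (Call f) U (vunion (vsmult (kstar A) V) (vlang (lomega A)))"

definition justified :: "('f \<Rightarrow> ('a, 'f) expr) \<Rightarrow> ('f, 'a, 'x) binding set \<Rightarrow> bool" where
  "justified body \<Delta> \<longleftrightarrow>
     (\<forall>(f, U, X)\<in>\<Delta>. \<exists>A V. free_of X V \<and>
        derives body \<Delta> (body f) U (vunion (vsmult A (vvar X)) V))"

definition models :: "('f \<Rightarrow> ('a, 'f) expr) \<Rightarrow> ('x \<Rightarrow> 'a word set)
    \<Rightarrow> ('f, 'a, 'x) binding set \<Rightarrow> bool" where
  "models body \<eta> \<Delta> \<longleftrightarrow> justified body \<Delta> \<and>
     (\<forall>(g, U', Y)\<in>\<Delta>. \<forall>w. div_trace body (Call g) w \<longrightarrow> w \<in> \<eta> Y)"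

end

theory Submission
  imports Defs
begin

definition ren :: "('x \<Rightarrow> 'x) \<Rightarrow> ('a, 'x) vexpr \<Rightarrow> ('a, 'x) vexpr" where
  "ren \<sigma> V = ((\<lambda>Y. \<Union>Z\<in>{Z. \<sigma> Z = Y}. fst V Z), snd V)"

definition renv :: "('x \<Rightarrow> 'x) \<Rightarrow> ('f, 'a, 'x) binding set \<Rightarrow> ('f, 'a, 'x) binding set" where
  "renv \<sigma> \<Delta> = (\<lambda>(f, U, X). (f, U, \<sigma> X)) ` \<Delta>"

lemma ren_vunion: "ren \<sigma> (vunion V W) = vunion (ren \<sigma> V) (ren \<sigma> W)"
  by (auto simp: ren_def vunion_def)

lemma ren_vsmult: "ren \<sigma> (vsmult A V) = vsmult A (ren \<sigma> V)"
  by (auto simp: ren_def vsmult_def lcat_def)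

lemma ren_vvar: "ren \<sigma> (vvar X) = vvar (\<sigma> X)"
  unfolding ren_def vvar_def by (rule prod_eqI) (auto intro!: ext split: if_splits)

lemma ren_vlang: "ren \<sigma> (vlang B) = vlang B"
  by (auto simp: ren_def vlang_def)

lemma ren_id: "ren id V = V"
  by (auto simp: ren_def)

lemma renv_id: "renv id \<Delta> = \<Delta>"
  by (auto simp: renv_def)

lemma ren_upd: "free_of X V \<Longrightarrow> ren (\<sigma>(X := X'')) V = ren \<sigma> V"
  unfolding ren_def free_of_def by (rule prod_eqI) (auto intro!: ext split: if_splits)

lemma support:
  "derives body \<Delta> e U V \<Longrightarrow> fst V Y \<noteq> {} \<Longrightarrow> Y \<in> bvars \<Delta>"
proof (induction arbitrary: Y rule: derives.induct)
  case (der_op \<Delta> a)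
  then show ?case by (simp add: vlang_def)
next
  case (der_seq \<Delta> e1 U1 V1 e2 U2 V2)
  then show ?case by (auto simp: vunion_def vsmult_def lcat_def)
next
  case (der_choice \<Delta> e1 U1 V1 e2 U2 V2)
  then show ?case by (auto simp: vunion_def)
next
  case (der_var \<Delta> f U X)
  then show ?case by (force simp: vvar_def bvars_def split: if_splits)
next
  case (der_rec X \<Delta> V f U A)
  from der_rec.prems have "fst V Y \<noteq> {}"
    by (auto simp: vunion_def vsmult_def vlang_def lcat_def)
  then have "fst (vunion (vsmult A (vvar X)) V) Y \<noteq> {}" by (auto simp: vunion_def)
  then have "Y \<in> bvars (insert (f, U, X) \<Delta>)" using der_rec.IH by blast
  moreover have "Y \<noteq> X" using der_rec.hyps(2) \<open>fst V Y \<noteq> {}\<close> by (auto simp: free_of_def)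
  ultimately show ?case by (auto simp: bvars_def)
qed

lemma bvarsI: "(g, U', Y) \<in> \<Delta> \<Longrightarrow> Y \<in> bvars \<Delta>"
  unfolding bvars_def by (rule image_eqI[where x="(g, U', Y)"]) auto

lemma bvarsE: "Y \<in> bvars \<Delta> \<Longrightarrow> (\<And>g U'. (g, U', Y) \<in> \<Delta> \<Longrightarrow> P) \<Longrightarrow> P"
  unfolding bvars_def by auto

lemma env_insert: "env \<Delta> \<Longrightarrow> X \<notin> bvars \<Delta> \<Longrightarrow> env (insert (f, U, X) \<Delta>)"
  unfolding env_def bvars_def by force

lemma finite_bvars: "env \<Delta> \<Longrightarrow> finite (bvars \<Delta>)"
  unfolding env_def bvars_def by auto

lemma weaken:
  assumes inf: "infinite (UNIV :: 'x set)"
  shows "derives body \<Delta> e U V \<Longrightarrow> env \<Delta>2 \<Longrightarrow> renv \<sigma> \<Delta> \<subseteq> \<Delta>2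
    \<Longrightarrow> derives body \<Delta>2 e U (ren \<sigma> (V :: ('a, 'x) vexpr))"
proof (induction arbitrary: \<sigma> \<Delta>2 rule: derives.induct)
  case (der_op \<Delta> a)
  then show ?case by (simp add: ren_vlang derives.der_op)
next
  case (der_seq \<Delta> e1 U1 V1 e2 U2 V2)
  then show ?case by (simp add: ren_vunion ren_vsmult derives.der_seq)
next
  case (der_choice \<Delta> e1 U1 V1 e2 U2 V2)
  then show ?case by (simp add: ren_vunion derives.der_choice)
next
  case (der_var \<Delta> f U X)
  have "(f, U, \<sigma> X) \<in> \<Delta>2" using der_var by (force simp: renv_def)
  then show ?case using der_var by (simp add: ren_vvar derives.der_var)
next
  case (der_rec X \<Delta> V f U A)
  have "finite (bvars \<Delta>2)" using der_rec.prems(1) by (rule finite_bvars)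
  then obtain X'' where X'': "X'' \<notin> bvars \<Delta>2"
    using ex_new_if_finite[OF inf] by blast
  define \<sigma>' where "\<sigma>' = \<sigma>(X := X'')"
  have r1: "renv \<sigma>' (insert (f, U, X) \<Delta>) = insert (f, U, X'') (renv \<sigma> \<Delta>)"
  proof -
    have "(\<lambda>(f, U, Y). (f, U, \<sigma>' Y)) b = (\<lambda>(f, U, Y). (f, U, \<sigma> Y)) b" if "b \<in> \<Delta>" for b
    proof -
      obtain g U' Y where b: "b = (g, U', Y)" by (cases b) auto
      have "Y \<noteq> X" using bvarsI[of g U' Y \<Delta>] that b der_rec.hyps(1) by auto
      then show ?thesis using b by (simp add: \<sigma>'_def)
    qed
    then have img: "(\<lambda>(f, U, Y). (f, U, \<sigma>' Y)) ` \<Delta> = (\<lambda>(f, U, Y). (f, U, \<sigma> Y)) ` \<Delta>"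
      by (rule image_cong[OF refl])
    have pt: "(\<lambda>(f, U, Y). (f, U, \<sigma>' Y)) (f, U, X) = (f, U, X'')" by (simp add: \<sigma>'_def)
    show ?thesis unfolding renv_def image_insert img pt ..
  qed
  have s2: "renv \<sigma>' (insert (f, U, X) \<Delta>) \<subseteq> insert (f, U, X'') \<Delta>2"
  proof -
    have "renv \<sigma> \<Delta> \<subseteq> \<Delta>2" using der_rec.prems(2) .
    then show ?thesis unfolding r1 by (rule insert_mono)
  qed
  have e2: "env (insert (f, U, X'') \<Delta>2)" by (rule env_insert[OF der_rec.prems(1) X''])
  have d: "derives body (insert (f, U, X'') \<Delta>2) (body f) U
      (ren \<sigma>' (vunion (vsmult A (vvar X)) V))"
    by (rule der_rec.IH[OF e2 s2])
  have e: "ren \<sigma>' (vunion (vsmult A (vvar X)) V) = vunion (vsmult A (vvar X'')) (ren \<sigma>' V)"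
    by (simp add: ren_vunion ren_vsmult ren_vvar \<sigma>'_def)
  have "\<forall>Z. \<sigma>' Z = X'' \<longrightarrow> fst V Z = {}"
  proof (intro allI impI, rule ccontr)
    fix Z assume Z: "\<sigma>' Z = X''" "fst V Z \<noteq> {}"
    then have "fst (vunion (vsmult A (vvar X)) V) Z \<noteq> {}" by (auto simp: vunion_def)
    then have "Z \<in> bvars (insert (f, U, X) \<Delta>)" by (rule support[OF der_rec.hyps(3)])
    moreover have "Z \<noteq> X" using der_rec.hyps(2) Z by (auto simp: free_of_def)
    moreover have "bvars (insert (f, U, X) \<Delta>) = insert X (bvars \<Delta>)" by (simp add: bvars_def)
    ultimately have "Z \<in> bvars \<Delta>" by simp
    then obtain g U' where gU: "(g, U', Z) \<in> \<Delta>" by (rule bvarsE)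
    then have "(g, U', \<sigma> Z) \<in> renv \<sigma> \<Delta>" unfolding renv_def
      by (rule image_eqI[rotated]) simp
    then have "(g, U', \<sigma> Z) \<in> \<Delta>2" using der_rec.prems(2) by (rule subsetD[rotated])
    then have "\<sigma> Z \<in> bvars \<Delta>2" by (rule bvarsI)
    then show False using Z \<open>Z \<noteq> X\<close> X'' by (simp add: \<sigma>'_def)
  qed
  then have "free_of X'' (ren \<sigma>' V)" unfolding free_of_def ren_def by auto
  then have "derives body \<Delta>2 (Call f) U (vunion (vsmult (kstar A) (ren \<sigma>' V)) (vlang (lomega A)))"
    using derives.der_rec[OF X'' \<open>free_of X'' (ren \<sigma>' V)\<close>] d unfolding e by blast
  then show ?case
    by (simp add: ren_vunion ren_vsmult ren_vlang ren_upd[OF der_rec.hyps(2)] \<sigma>'_def)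
qed

theorem lemma2:
  fixes body :: "'f::finite \<Rightarrow> ('a::finite, 'f) expr"
    and \<Delta> :: "('f, 'a, 'x) binding set"
    and \<eta> :: "'x \<Rightarrow> 'a word set"
    and f :: 'f and U :: "'a list set" and X :: 'x and V0 :: "'a word set"
    and A :: "'a list set" and V :: "('a, 'x) vexpr"
  assumes "infinite (UNIV :: 'x set)"
    and "env \<Delta>"
    and "models body \<eta> \<Delta>"
    and "X \<notin> bvars \<Delta>"
    and "\<forall>w. div_trace body (Call f) w \<longrightarrow> w \<in> V0"
    and "free_of X V"
    and "derives body (insert (f, U, X) \<Delta>) (body f) U (vunion (vsmult A (vvar X)) V)"
  shows "models body (\<eta>(X := V0)) (insert (f, U, X) \<Delta>)"
proof -
  have env2: "env (insert (f, U, X) \<Delta>)" by (rule env_insert[OF assms(2,4)])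
  have sub: "renv id \<Delta> \<subseteq> insert (f, U, X) \<Delta>" by (auto simp: renv_id)
  have W: "derives body (insert (f, U, X) \<Delta>) e U' W" if "derives body \<Delta> e U' W" for e U' W
    using weaken[OF assms(1) that env2 sub] by (simp add: ren_id)
  have j: "justified body (insert (f, U, X) \<Delta>)"
    unfolding justified_def
  proof (intro ballI)
    fix b assume b: "b \<in> insert (f, U, X) \<Delta>"
    obtain g U' Y where bb: "b = (g, U', Y)" by (cases b) auto
    show "case b of (f0, U0, X0) \<Rightarrow> \<exists>A V. free_of X0 V \<and>
        derives body (insert (f, U, X) \<Delta>) (body f0) U0 (vunion (vsmult A (vvar X0)) V)"
    proof (cases "b = (f, U, X)")
      case True then show ?thesis using assms(6,7) by (simp only: prod.case) blast
    next
      case False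
      then have "b \<in> \<Delta>" using b by auto
      then obtain A' V' where fv: "free_of Y V'" and dv: "derives body \<Delta> (body g) U' (vunion (vsmult A' (vvar Y)) V')"
        using assms(3) bb unfolding models_def justified_def by fastforce
      have "derives body (insert (f, U, X) \<Delta>) (body g) U' (vunion (vsmult A' (vvar Y)) V')"
        by (rule W[OF dv])
      then show ?thesis using fv bb by (simp only: prod.case) blast
    qed
  qed
  have "\<forall>(g, U', Y)\<in>insert (f, U, X) \<Delta>. \<forall>w. div_trace body (Call g) w \<longrightarrow> w \<in> (\<eta>(X := V0)) Y"
  proof (intro ballI)
    fix b assume b: "b \<in> insert (f, U, X) \<Delta>"
    obtain g U' Y where bb: "b = (g, U', Y)" by (cases b) auto
    show "case b of (g, U', Y) \<Rightarrow> \<forall>w. div_trace body (Call g) w \<longrightarrow> w \<in> (\<eta>(X := V0)) Y"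
    proof (cases "b = (f, U, X)")
      case True then show ?thesis using assms(5) by auto
    next
      case False
      then have "b \<in> \<Delta>" using b by auto
      then have "Y \<noteq> X" using assms(4) bb bvarsI[of g U' Y \<Delta>] by auto
      then show ?thesis using assms(3) \<open>b \<in> \<Delta>\<close> bb unfolding models_def by fastforce
    qed
  qed
  then show ?thesis using j unfolding models_def by blast
qed

end
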